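(* Let $C\subset\mathbb R^3$ be a non-closed embedded curve of length $l>0$ with nowhere vanishing curvature and arc-length parametrization $\mathbf c:[-l/2,l/2]\to\mathbb R^3$ inducing its orientation. Let $F\in\mathcal D_*(C)$ be a normal form with $F(s,0)=\mathbf c(s)$, and let $T$ be a non-trivial symmetry of $C$. Then: (1) if $T$ is a positive symmetry, then $T\circ F=F_*$; moreover, if $\mu_F$ has a symmetry, then $T\circ F(-s,v)=\check F(s,v)$; (2) if $T$ is a negative symmetry, then $T\circ F=\check F_*$; moreover, if $\mu_F$ has a symmetry, then $T\circ F(-s,v)=F(s,v)$.
   Context: $-C$ denotes $C$ with reversed orientation. For a regular parametrization $\mathbf c_f$ of $C$: curvature $\kappa_f$, torsion $\tau_f$, Frenet frame $(\mathbf e,\mathbf n,\mathbf b)$; $\kappa$ is the curvature of $\mathbf c$. A developable strip along $C$ is the germ along $C$ of a $C^\infty$ embedding $f(u,v)=f(u,0)+v\,\xi_f(u)$ with $\mathbf c_f(u):=f(u,0)$ parametrizing $C$, $\xi_f$ unit, and zero Gaussian curvature; write $\xi_f=\cos\beta_f\,\mathbf e+\sin\beta_f(\cos\alpha_f\,\mathbf n+\sin\alpha_f\,\mathbf b)$. $\mathcal D(C)$: such strips with $\mathbf c_f$ inducing the orientation of $C$ and $0<|\cos\alpha_f|<1$, normalized by $0<|\alpha_f|<\pi/2$ (first angular function), $0<\beta_f<\pi$. Geodesic curvature $\mu_f=\kappa_f\cos\alpha_f$; admissible ($\in\mathcal D_*(C)$) if $\mu_f<\min\kappa_f$ everywhere.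 A normal form is a strip $F(s,v)$ defined near $[-l/2,l/2]\times\{0\}$ with $s\mapsto F(s,0)$ an arc-length parametrization of $C$ (of either orientation); a normal form is determined by that parametrization and its first angular function $\alpha$ (since zero Gaussian curvature means $\cot\beta=(\alpha'+\tau)/(\kappa\sin\alpha)$), and every smooth $\alpha$ with values in $(-\pi/2,\pi/2)\setminus\{0\}$ occurs. Dual: $\check F$ is the normal form with $\check F(s,0)=F(s,0)$ and first angular function $-\alpha_F$. Inverse: $F_*\in\mathcal D_*(-C)$ is the normal form with $F_*(s,0)=\mathbf c(-s)$ whose first angular function (w.r.t. the Frenet frame of $s\mapsto\mathbf c(-s)$) has the same sign as $\alpha_F(s)$ and satisfies $\kappa(-s)\cos\alpha_{F_*}(s)=\kappa(s)\cos\alpha_F(s)$; the inverse dual $\check F_*$ is the dual of $F_*$. A function $\mu$ on $[-l/2,l/2]$ has a symmetry if $\mu(-s)=\mu(s)$ for all $s$. A symmetry of $C$ is an isometry $T\ne\mathrm{id}$ of $\mathbb R^3$ with $T(C)=C$; it is non-trivial if $T(\mathbf x)\ne\mathbf x$ for some $\mathbf x\in C$, and positive (resp. negative) if $T$ preserves (resp. reverses) the orientation of $\mathbb R^3$. *)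

theory Defs
  imports "HOL-Analysis.Analysis"
begin

definition vd :: "(real \<Rightarrow> 'a::real_normed_vector) \<Rightarrow> real \<Rightarrow> 'a" where
  "vd f t = vector_derivative f (at t)"

definition smooth_fn :: "(real \<Rightarrow> 'a::real_normed_vector) \<Rightarrow> bool" where
  "smooth_fn f \<longleftrightarrow> (\<forall>k x. ((vd ^^ k) f) differentiable (at x))"

definition tangent :: "(real \<Rightarrow> real^3) \<Rightarrow> real \<Rightarrow> real^3" where
  "tangent c s = vd c s"
definition curvature :: "(real \<Rightarrow> real^3) \<Rightarrow> real \<Rightarrow> real" where
  "curvature c s = norm (vd (vd c) s)"
definition principal_normal :: "(real \<Rightarrow> real^3) \<Rightarrow> real \<Rightarrow> real^3" where
  "principal_normal c s = (1 / curvature c s) *\<^sub>R vd (vd c) s"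
definition binormal :: "(real \<Rightarrow> real^3) \<Rightarrow> real \<Rightarrow> real^3" where
  "binormal c s = cross3 (tangent c s) (principal_normal c s)"
definition torsion :: "(real \<Rightarrow> real^3) \<Rightarrow> real \<Rightarrow> real" where
  "torsion c s = vd (principal_normal c) s \<bullet> binormal c s"

definition arccot :: "real \<Rightarrow> real" where
  "arccot x = pi / 2 - arctan x"

definition beta_fn :: "(real \<Rightarrow> real^3) \<Rightarrow> (real \<Rightarrow> real) \<Rightarrow> real \<Rightarrow> real" where
  "beta_fn c \<alpha> s = arccot ((vd \<alpha> s + torsion c s) / (curvature c s * sin (\<alpha> s)))"

definition ruling :: "(real \<Rightarrow> real^3) \<Rightarrow> (real \<Rightarrow> real) \<Rightarrow> real \<Rightarrow> real^3" where
  "ruling c \<alpha> s = cos (beta_fn c \<alpha> s) *\<^sub>R tangent c s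
     + sin (beta_fn c \<alpha> s) *\<^sub>R (cos (\<alpha> s) *\<^sub>R principal_normal c s
                                  + sin (\<alpha> s) *\<^sub>R binormal c s)"

definition normal_form :: "(real \<Rightarrow> real^3) \<Rightarrow> (real \<Rightarrow> real) \<Rightarrow> real \<Rightarrow> real \<Rightarrow> real^3" where
  "normal_form c \<alpha> s v = c s + v *\<^sub>R ruling c \<alpha> s"

definition interv :: "real \<Rightarrow> real set" where
  "interv l = {-l/2 .. l/2}"

definition arclength_curve :: "real \<Rightarrow> (real \<Rightarrow> real^3) \<Rightarrow> bool" where
  "arclength_curve l c \<longleftrightarrow> l > 0 \<and> smooth_fn c \<and> inj_on c (interv l)
     \<and> (\<forall>s\<in>interv l. norm (vd c s) = 1) \<and> (\<forall>s\<in>interv l. curvature c s \<noteq> 0)"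

definition geod_curv :: "(real \<Rightarrow> real^3) \<Rightarrow> (real \<Rightarrow> real) \<Rightarrow> real \<Rightarrow> real" where
  "geod_curv c \<alpha> s = curvature c s * cos (\<alpha> s)"

definition admissible_angle :: "real \<Rightarrow> (real \<Rightarrow> real^3) \<Rightarrow> (real \<Rightarrow> real) \<Rightarrow> bool" where
  "admissible_angle l c \<alpha> \<longleftrightarrow> smooth_fn \<alpha>
     \<and> (\<forall>s\<in>interv l. -pi/2 < \<alpha> s \<and> \<alpha> s < pi/2 \<and> \<alpha> s \<noteq> 0)
     \<and> (\<forall>s\<in>interv l. geod_curv c \<alpha> s < (INF t\<in>interv l. curvature c t))"

definition dual_nf :: "(real \<Rightarrow> real^3) \<Rightarrow> (real \<Rightarrow> real) \<Rightarrow> real \<Rightarrow> real \<Rightarrow> real^3" where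
  "dual_nf c \<alpha> = normal_form c (\<lambda>s. - \<alpha> s)"

text \<open>First angular function of the inverse: same sign as alpha(s) and
  kappa(-s) cos alpha_*(s) = kappa(s) cos alpha(s).\<close>
definition alpha_inv :: "(real \<Rightarrow> real^3) \<Rightarrow> (real \<Rightarrow> real) \<Rightarrow> real \<Rightarrow> real" where
  "alpha_inv c \<alpha> s = sgn (\<alpha> s) * arccos (curvature c s * cos (\<alpha> s) / curvature c (-s))"

definition inverse_nf :: "(real \<Rightarrow> real^3) \<Rightarrow> (real \<Rightarrow> real) \<Rightarrow> real \<Rightarrow> real \<Rightarrow> real^3" where
  "inverse_nf c \<alpha> = normal_form (\<lambda>s. c (-s)) (alpha_inv c \<alpha>)"

definition inverse_dual_nf :: "(real \<Rightarrow> real^3) \<Rightarrow> (real \<Rightarrow> real) \<Rightarrow> real \<Rightarrow> real \<Rightarrow> real^3" where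
  "inverse_dual_nf c \<alpha> = dual_nf (\<lambda>s. c (-s)) (alpha_inv c \<alpha>)"

definition isometry3 :: "(real^3 \<Rightarrow> real^3) \<Rightarrow> bool" where
  "isometry3 T \<longleftrightarrow> (\<forall>x y. dist (T x) (T y) = dist x y)"

definition symmetry_of :: "(real^3 \<Rightarrow> real^3) \<Rightarrow> (real^3) set \<Rightarrow> bool" where
  "symmetry_of T C \<longleftrightarrow> isometry3 T \<and> T \<noteq> id \<and> T ` C = C"

definition nontrivial_symmetry :: "(real^3 \<Rightarrow> real^3) \<Rightarrow> (real^3) set \<Rightarrow> bool" where
  "nontrivial_symmetry T C \<longleftrightarrow> symmetry_of T C \<and> (\<exists>x\<in>C. T x \<noteq> x)"

definition positive_isom :: "(real^3 \<Rightarrow> real^3) \<Rightarrow> bool" where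
  "positive_isom T \<longleftrightarrow> det (matrix (\<lambda>x. T x - T 0)) > 0"
definition negative_isom :: "(real^3 \<Rightarrow> real^3) \<Rightarrow> bool" where
  "negative_isom T \<longleftrightarrow> det (matrix (\<lambda>x. T x - T 0)) < 0"

definition has_symmetry :: "real \<Rightarrow> (real \<Rightarrow> real) \<Rightarrow> bool" where
  "has_symmetry l \<mu> \<longleftrightarrow> (\<forall>s\<in>interv l. \<mu> (-s) = \<mu> s)"

end

theory Submission
  imports Defs
begin


lemma vd_has: "f differentiable (at x) \<Longrightarrow> (f has_vector_derivative vd f x) (at x)"
  by (simp add: vd_def vector_derivative_works[symmetric])

lemma vd_eqI: "(f has_vector_derivative f') (at x) \<Longrightarrow> vd f x = f'"
  by (simp add: vd_def vector_derivative_at)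

lemma smooth_d0: "smooth_fn f \<Longrightarrow> f differentiable (at x)"
proof -
  assume "smooth_fn f" then have "((vd ^^ 0) f) differentiable (at x)" unfolding smooth_fn_def by blast
  then show ?thesis by simp
qed

lemma smooth_d1: "smooth_fn f \<Longrightarrow> vd f differentiable (at x)"
proof -
  assume "smooth_fn f" then have "((vd ^^ 1) f) differentiable (at x)" unfolding smooth_fn_def by blast
  then show ?thesis by simp
qed

lemma smooth_d2: "smooth_fn f \<Longrightarrow> vd (vd f) differentiable (at x)"
proof -
  assume "smooth_fn f" then have "((vd ^^ 2) f) differentiable (at x)" unfolding smooth_fn_def by blast
  then show ?thesis by (simp add: numeral_2_eq_2)
qed

lemma has_neg:
  assumes "(f has_vector_derivative f') (at (-s))"
  shows "((\<lambda>t. f (-t)) has_vector_derivative (- f')) (at s)"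
proof -
  have "((\<lambda>x::real. - x) has_real_derivative (-1::real)) (at s)"
    by (rule DERIV_minus[OF DERIV_ident])
  then have "(uminus has_vector_derivative (-1::real)) (at s)"
    by (simp add: has_real_derivative_iff_has_vector_derivative)
  from vector_diff_chain_at[OF this, of f f'] assms show ?thesis by (simp add: o_def)
qed

lemma diff_neg: "f differentiable (at (-(s::real))) \<Longrightarrow> (\<lambda>t. f (-t)) differentiable (at s)"
  by (rule differentiableI_vector, rule has_neg, rule vd_has)

lemma vd_neg: "f differentiable (at (-(s::real))) \<Longrightarrow> vd (\<lambda>t. f (-t)) s = - vd f (-s)"
  by (rule vd_eqI, rule has_neg, rule vd_has)

lemma vd_lin: "bounded_linear L \<Longrightarrow> f differentiable (at s) \<Longrightarrow> vd (\<lambda>t. L (f t)) s = L (vd f s)"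
  by (rule vd_eqI, rule bounded_linear.has_vector_derivative, assumption, rule vd_has)

lemma vd_eq_ivl:
  fixes f g :: "real \<Rightarrow> 'a::euclidean_space"
  assumes "f differentiable (at x)" "g differentiable (at x)" "a < b" "x \<in> {a..b}"
    "\<And>y. y \<in> {a..b} \<Longrightarrow> f y = g y"
  shows "vd f x = vd g x"
proof -
  have 1: "vector_derivative f (at x within {a..b}) = vd f x"
    using vector_derivative_at_within_ivl[OF vd_has[OF assms(1)]] assms by auto
  have 2: "vector_derivative g (at x within {a..b}) = vd g x"
    using vector_derivative_at_within_ivl[OF vd_has[OF assms(2)]] assms by auto
  have "(g has_vector_derivative vd f x) (at x within {a..b})"
    by (rule has_vector_derivative_transform[of x _ _ f])
       (use assms vd_has[OF assms(1)] has_vector_derivative_at_within in auto)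
  then have "vector_derivative g (at x within {a..b}) = vd f x"
    using vector_derivative_within_closed_interval assms by blast
  with 2 show ?thesis by simp
qed



lemma vd_uminus: "f differentiable (at s) \<Longrightarrow> vd (\<lambda>t. - f t) s = - vd f s"
  by (rule vd_eqI, rule has_vector_derivative_minus, rule vd_has)

lemma kappa_diff:
  assumes "smooth_fn c" "curvature c x \<noteq> 0"
  shows "curvature c differentiable (at x)"
proof -
  have nz: "vd (vd c) x \<noteq> 0" using assms(2) by (auto simp: curvature_def)
  have "(\<lambda>s. norm (vd (vd c) s)) differentiable (at x)"
    by (rule differentiable_compose[of norm], simp add: nz, rule smooth_d2[OF assms(1)])
  then show ?thesis unfolding curvature_def[abs_def] .
qed

lemma pn_diff:
  assumes "smooth_fn c" "curvature c x \<noteq> 0"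
  shows "principal_normal c differentiable (at x)"
proof -
  have "(\<lambda>s. (1 / curvature c s) *\<^sub>R vd (vd c) s) differentiable (at x)"
    using kappa_diff[OF assms] assms(2) smooth_d2[OF assms(1)] by (intro differentiable_scaleR differentiable_divide) auto
  then show ?thesis unfolding principal_normal_def[abs_def] .
qed

lemma rev_vd: "smooth_fn c \<Longrightarrow> vd (\<lambda>t. c (-t)) = (\<lambda>s. - vd c (-s))"
  by (rule ext, rule vd_neg, rule smooth_d0)

lemma rev_vd2: "smooth_fn c \<Longrightarrow> vd (vd (\<lambda>t. c (-t))) s = vd (vd c) (-s)"
proof -
  assume c: "smooth_fn c"
  have "vd (vd (\<lambda>t. c (-t))) s = vd (\<lambda>s. - vd c (-s)) s" by (simp add: rev_vd[OF c])
  also have "\<dots> = - vd (\<lambda>s. vd c (-s)) s"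
    by (rule vd_uminus, rule diff_neg, rule smooth_d1[OF c])
  also have "\<dots> = vd (vd c) (-s)"
    by (simp add: vd_neg smooth_d1[OF c])
  finally show ?thesis .
qed

lemma rev_kappa: "smooth_fn c \<Longrightarrow> curvature (\<lambda>t. c (-t)) s = curvature c (-s)"
  by (simp add: curvature_def rev_vd2)

lemma rev_pn: "smooth_fn c \<Longrightarrow> principal_normal (\<lambda>t. c (-t)) = (\<lambda>s. principal_normal c (-s))"
  by (rule ext, simp add: principal_normal_def rev_kappa rev_vd2)

lemma rev_tan: "smooth_fn c \<Longrightarrow> tangent (\<lambda>t. c (-t)) s = - tangent c (-s)"
  by (simp add: tangent_def rev_vd)

lemma rev_bn: "smooth_fn c \<Longrightarrow> binormal (\<lambda>t. c (-t)) s = - binormal c (-s)"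
  by (simp add: binormal_def rev_tan rev_pn)

lemma rev_tau: "smooth_fn c \<Longrightarrow> curvature c (-s) \<noteq> 0 \<Longrightarrow> torsion (\<lambda>t. c (-t)) s = torsion c (-s)"
  by (simp add: torsion_def rev_pn rev_bn vd_neg pn_diff)



lemma ratio_lim:
  fixes c :: "real \<Rightarrow> 'a::real_normed_vector" and \<phi> :: "real \<Rightarrow> real"
  assumes dw: "(c has_vector_derivative w) (at s)" and du: "(c has_vector_derivative u) (at t)"
    and nw: "norm w = 1" and nu: "norm u = 1"
    and lim: "(\<phi> \<longlongrightarrow> t) (at s within I)"
    and ne: "\<forall>y\<in>I. y \<noteq> s \<longrightarrow> \<phi> y \<noteq> t"
    and eq: "\<forall>y\<in>I. norm (c (\<phi> y) - c t) = norm (c y - c s)"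
  shows "((\<lambda>y. \<bar>\<phi> y - t\<bar> / \<bar>y - s\<bar>) \<longlongrightarrow> 1) (at s within I)"
proof -
  define E1 where "E1 k = ((c k - c t) - (k - t) *\<^sub>R u) /\<^sub>R \<bar>k - t\<bar>" for k
  define E2 where "E2 y = ((c y - c s) - (y - s) *\<^sub>R w) /\<^sub>R \<bar>y - s\<bar>" for y
  have l1: "(E1 \<longlongrightarrow> 0) (at t)"
    using du unfolding has_vector_derivative_def has_derivative_at_within E1_def by simp
  have dwI: "(c has_vector_derivative w) (at s within I)"
    using dw has_vector_derivative_at_within by blast
  have l2: "(E2 \<longlongrightarrow> 0) (at s within I)"
    using dwI unfolding has_vector_derivative_def has_derivative_at_within E2_def by simp
  have ev: "eventually (\<lambda>y. y \<in> I \<and> y \<noteq> s) (at s within I)"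
    by (simp add: eventually_at_filter)
  have fl: "filterlim \<phi> (at t) (at s within I)"
    by (rule filterlim_atI[OF lim]) (use ev ne in \<open>auto elim: eventually_mono\<close>)
  have l1': "((\<lambda>y. E1 (\<phi> y)) \<longlongrightarrow> 0) (at s within I)"
    using filterlim_compose[OF l1 fl] .
  define e1 where "e1 y = norm (E1 (\<phi> y))" for y
  define e2 where "e2 y = norm (E2 y)" for y
  have le1: "(e1 \<longlongrightarrow> 0) (at s within I)" unfolding e1_def using tendsto_norm[OF l1'] by simp
  have le2: "(e2 \<longlongrightarrow> 0) (at s within I)" unfolding e2_def using tendsto_norm[OF l2] by simp
  have ev1: "eventually (\<lambda>y. e1 y < 1) (at s within I)"
    using order_tendstoD(2)[OF le1] by simp
  have key: "(1 - e2 y) / (1 + e1 y) \<le> \<bar>\<phi> y - t\<bar> / \<bar>y - s\<bar> \<and> \<bar>\<phi> y - t\<bar> / \<bar>y - s\<bar> \<le> (1 + e2 y) / (1 - e1 y)"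
    if y: "y \<in> I" "y \<noteq> s" "e1 y < 1" for y
  proof -
    define A where "A = \<bar>\<phi> y - t\<bar>"
    define B where "B = \<bar>y - s\<bar>"
    have A0: "A > 0" using ne y unfolding A_def by auto
    have B0: "B > 0" using y unfolding B_def by auto
    have e1p: "e1 y \<ge> 0" "e2 y \<ge> 0" unfolding e1_def e2_def by auto
    have d1: "c (\<phi> y) - c t = (\<phi> y - t) *\<^sub>R u + A *\<^sub>R E1 (\<phi> y)"
      using A0 unfolding E1_def A_def by simp
    have d2: "c y - c s = (y - s) *\<^sub>R w + B *\<^sub>R E2 y"
      using B0 unfolding E2_def B_def by simp
    have n1: "norm ((\<phi> y - t) *\<^sub>R u) = A" "norm (A *\<^sub>R E1 (\<phi> y)) = A * e1 y"
      using nu A0 unfolding A_def e1_def by auto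
    have n2: "norm ((y - s) *\<^sub>R w) = B" "norm (B *\<^sub>R E2 y) = B * e2 y"
      using nw B0 unfolding B_def e2_def by auto
    have N: "norm (c (\<phi> y) - c t) = norm (c y - c s)" using eq y by auto
    have a1: "norm (c (\<phi> y) - c t) \<le> A + A * e1 y" "A - A * e1 y \<le> norm (c (\<phi> y) - c t)"
      unfolding d1 using norm_triangle_ineq[of "(\<phi> y - t) *\<^sub>R u" "A *\<^sub>R E1 (\<phi> y)"]
        norm_diff_ineq[of "(\<phi> y - t) *\<^sub>R u" "A *\<^sub>R E1 (\<phi> y)"] n1 by auto
    have a2: "norm (c y - c s) \<le> B + B * e2 y" "B - B * e2 y \<le> norm (c y - c s)"
      unfolding d2 using norm_triangle_ineq[of "(y - s) *\<^sub>R w" "B *\<^sub>R E2 y"]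
        norm_diff_ineq[of "(y - s) *\<^sub>R w" "B *\<^sub>R E2 y"] n2 by auto
    have i1: "B * (1 - e2 y) \<le> A * (1 + e1 y)" using a1 a2 N by (simp add: algebra_simps)
    have i2: "A * (1 - e1 y) \<le> B * (1 + e2 y)" using a1 a2 N by (simp add: algebra_simps)
    have "(1 - e2 y) / (1 + e1 y) \<le> A / B"
      using i1 B0 e1p by (simp add: divide_simps mult.commute)
    moreover have "A / B \<le> (1 + e2 y) / (1 - e1 y)"
      using i2 B0 e1p y(3) by (simp add: divide_simps mult.commute)
    ultimately show ?thesis unfolding A_def B_def by simp
  qed
  have lo: "((\<lambda>y. (1 - e2 y) / (1 + e1 y)) \<longlongrightarrow> 1) (at s within I)"
    using tendsto_divide[OF tendsto_diff[OF tendsto_const le2] tendsto_add[OF tendsto_const le1], of 1 1] by simp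
  have hi: "((\<lambda>y. (1 + e2 y) / (1 - e1 y)) \<longlongrightarrow> 1) (at s within I)"
    using tendsto_divide[OF tendsto_add[OF tendsto_const le2] tendsto_diff[OF tendsto_const le1], of 1 1] by simp
  show ?thesis
  proof (rule tendsto_sandwich[OF _ _ lo hi])
    show "eventually (\<lambda>y. (1 - e2 y) / (1 + e1 y) \<le> \<bar>\<phi> y - t\<bar> / \<bar>y - s\<bar>) (at s within I)"
      using eventually_conj[OF ev ev1] by (rule eventually_mono) (use key in blast)
    show "eventually (\<lambda>y. \<bar>\<phi> y - t\<bar> / \<bar>y - s\<bar> \<le> (1 + e2 y) / (1 - e1 y)) (at s within I)"
      using eventually_conj[OF ev ev1] by (rule eventually_mono) (use key in blast)
  qed
qed



lemma cont_inj_incr: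
  fixes f :: "real \<Rightarrow> real"
  assumes ab: "a < b" and cont: "continuous_on {a..b} f" and inj: "inj_on f {a..b}" and fab: "f a < f b"
  shows "\<forall>x\<in>{a..b}. \<forall>y\<in>{a..b}. x < y \<longrightarrow> f x < f y"
proof -
  have c1: "f a < f x \<and> f x < f b" if "a < x" "x < b" for x
    using continuous_inj_imp_mono[OF that cont inj] fab by auto
  show ?thesis
  proof (intro ballI impI)
    fix x y assume x: "x \<in> {a..b}" and y: "y \<in> {a..b}" and xy: "x < y"
    show "f x < f y"
    proof (cases "x = a")
      case True
      then show ?thesis using c1[of y] xy y fab by (cases "y = b") auto
    next
      case False
      then have ax: "a < x" using x by auto
      show ?thesis
      proof (cases "y = b")
        case True then show ?thesis using c1[of x] ax xy by auto
      next
        case False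
        then have yb: "y < b" using y by auto
        have "continuous_on {a..y} f" using continuous_on_subset[OF cont] yb by auto
        moreover have "inj_on f {a..y}" using inj_on_subset[OF inj] yb by auto
        ultimately have "(f a < f x \<and> f x < f y) \<or> (f y < f x \<and> f x < f a)"
          using continuous_inj_imp_mono[OF ax xy] by blast
        then show ?thesis using c1[of y] ax xy yb by auto
      qed
    qed
  qed
qed

lemma cont_inj_mono:
  fixes f :: "real \<Rightarrow> real"
  assumes ab: "a < b" and cont: "continuous_on {a..b} f" and inj: "inj_on f {a..b}"
  shows "(\<forall>x\<in>{a..b}. \<forall>y\<in>{a..b}. x < y \<longrightarrow> f x < f y) \<or> (\<forall>x\<in>{a..b}. \<forall>y\<in>{a..b}. x < y \<longrightarrow> f y < f x)"
proof (cases "f a < f b")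
  case True
  then show ?thesis using cont_inj_incr[OF ab cont inj] by blast
next
  case False
  then have "f a \<noteq> f b" using inj ab by (auto dest: inj_onD)
  with False have "(\<lambda>x. - f x) a < (\<lambda>x. - f x) b" by auto
  moreover have "continuous_on {a..b} (\<lambda>x. - f x)" using cont by (intro continuous_intros)
  moreover have "inj_on (\<lambda>x. - f x) {a..b}" using inj by (auto simp: inj_on_def)
  ultimately have "\<forall>x\<in>{a..b}. \<forall>y\<in>{a..b}. x < y \<longrightarrow> - f x < - f y"
    using cont_inj_incr[OF ab] by blast
  then show ?thesis by auto
qed



lemma isom_lin:
  assumes "isometry3 T"
  shows "orthogonal_transformation (\<lambda>x. T x - T 0)"
  unfolding orthogonal_transformation_isometry
  using assms by (auto simp: isometry3_def dist_norm)

lemma flip_from_phi: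
  fixes \<phi> :: "real \<Rightarrow> real" and a b :: real
  assumes ab: "a < b" and phiI: "\<forall>s\<in>{a..b}. \<phi> s \<in> {a..b}"
    and cont: "continuous_on {a..b} \<phi>" and inj: "inj_on \<phi> {a..b}"
    and rat: "\<And>s. s \<in> {a..b} \<Longrightarrow> ((\<lambda>y. \<bar>\<phi> y - \<phi> s\<bar> / \<bar>y - s\<bar>) \<longlongrightarrow> 1) (at s within {a..b})"
  shows "(\<forall>s\<in>{a..b}. \<phi> s = s) \<or> (\<forall>s\<in>{a..b}. \<phi> s = a + b - s)"
proof -
  let ?I = "{a..b}"
  obtain \<sigma> :: real where sig: "\<sigma> = 1 \<or> \<sigma> = -1"
    and sg: "\<forall>x\<in>?I. \<forall>y\<in>?I. x \<noteq> y \<longrightarrow> (\<phi> y - \<phi> x) / (y - x) = \<sigma> * (\<bar>\<phi> y - \<phi> x\<bar> / \<bar>y - x\<bar>)"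
  proof -
    from cont_inj_mono[OF ab cont inj] show ?thesis
    proof
      assume m: "\<forall>x\<in>?I. \<forall>y\<in>?I. x < y \<longrightarrow> \<phi> x < \<phi> y"
      have "(\<phi> y - \<phi> x) / (y - x) = 1 * (\<bar>\<phi> y - \<phi> x\<bar> / \<bar>y - x\<bar>)"
        if "x \<in> ?I" "y \<in> ?I" "x \<noteq> y" for x y
      proof (cases "x < y")
        case True
        then have "\<phi> x < \<phi> y" using m that by auto
        then show ?thesis using True by simp
      next
        case False then have "y < x" using that by auto
        then show ?thesis using m that
          by (smt (verit, best) abs_of_neg divide_minus_left divide_minus_right mult_1)
      qed
      then show ?thesis using that[of 1] by auto
    next
      assume m: "\<forall>x\<in>?I. \<forall>y\<in>?I. x < y \<longrightarrow> \<phi> y < \<phi> x"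
      have "(\<phi> y - \<phi> x) / (y - x) = -1 * (\<bar>\<phi> y - \<phi> x\<bar> / \<bar>y - x\<bar>)"
        if "x \<in> ?I" "y \<in> ?I" "x \<noteq> y" for x y
      proof (cases "x < y")
        case True then show ?thesis using m that
          by (smt (verit, best) abs_of_neg abs_of_pos divide_minus_left mult_minus1)
      next
        case False then have "y < x" using that by auto
        then show ?thesis using m that
          by (smt (verit, best) abs_of_neg abs_of_pos divide_minus_left divide_minus_right mult_minus1)
      qed
      then show ?thesis using that[of "-1"] by auto
    qed
  qed
  have der: "((\<lambda>x. \<phi> x - \<sigma> * x) has_derivative (\<lambda>h. 0)) (at s within ?I)" if s: "s \<in> ?I" for s
  proof -
    have "((\<lambda>y. (\<phi> y - \<phi> s) / (y - s)) \<longlongrightarrow> \<sigma> * 1) (at s within ?I)"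
    proof (rule Lim_transform_eventually[OF tendsto_mult_left[OF rat[OF s]]])
      show "eventually (\<lambda>y. \<sigma> * (\<bar>\<phi> y - \<phi> s\<bar> / \<bar>y - s\<bar>) = (\<phi> y - \<phi> s) / (y - s)) (at s within ?I)"
        unfolding eventually_at_filter using sg s by (auto intro!: always_eventually)
    qed
    then have "(\<phi> has_field_derivative \<sigma>) (at s within ?I)"
      by (simp add: has_field_derivative_iff)
    then have "((\<lambda>x. \<phi> x - \<sigma> * x) has_field_derivative \<sigma> - \<sigma> * 1) (at s within ?I)"
      by (intro derivative_intros DERIV_cmult DERIV_ident)
    then have "((\<lambda>x. \<phi> x - \<sigma> * x) has_derivative (*) 0) (at s within ?I)"
      by (simp add: has_field_derivative_def)
    moreover have "((*) (0::real)) = (\<lambda>h. 0)" by auto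
    ultimately show ?thesis by simp
  qed
  obtain K where K: "\<forall>x\<in>?I. \<phi> x - \<sigma> * x = K"
    using has_derivative_zero_constant[of ?I "\<lambda>x. \<phi> x - \<sigma> * x", OF convex_real_interval(5) der] by auto
  have pa: "\<phi> a \<in> ?I" "\<phi> b \<in> ?I" using phiI ab by auto
  have ka: "\<phi> a = K + \<sigma> * a" "\<phi> b = K + \<sigma> * b"
    using K ab by (metis atLeastAtMost_iff diff_eq_eq less_eq_real_def order_refl add.commute)+
  from sig show ?thesis
  proof
    assume "\<sigma> = 1"
    then have "K = 0" using pa ka by auto
    then show ?thesis using K \<open>\<sigma> = 1\<close> by auto
  next
    assume "\<sigma> = -1"
    then have "K = a + b" using pa ka by auto
    then show ?thesis using K \<open>\<sigma> = -1\<close> by auto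
  qed
qed


lemma sym_flip:
  assumes curve: "arclength_curve l c" and sym: "nontrivial_symmetry T (c ` interv l)"
  shows "\<forall>s\<in>interv l. T (c s) = c (-s)"
proof -
  define a where "a = - l / 2"
  define b where "b = l / 2"
  have I: "interv l = {a..b}" unfolding interv_def a_def b_def by simp
  have ab: "a < b" using curve unfolding arclength_curve_def a_def b_def by simp
  have sm: "smooth_fn c" and inj: "inj_on c {a..b}" and un: "\<forall>s\<in>{a..b}. norm (vd c s) = 1"
    using curve unfolding arclength_curve_def I by auto
  have iso: "isometry3 T" and TC: "T ` c ` {a..b} = c ` {a..b}" and nt: "\<exists>x\<in>c ` {a..b}. T x \<noteq> x"
    using sym unfolding nontrivial_symmetry_def symmetry_of_def I by auto
  have dT: "dist (T x) (T y) = dist x y" for x y using iso unfolding isometry3_def by auto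
  define L where "L = (\<lambda>x. T x - T 0)"
  have oL: "orthogonal_transformation L" unfolding L_def by (rule isom_lin[OF iso])
  have Teq: "T x = L x + T 0" for x unfolding L_def by auto
  have contT: "continuous_on UNIV T"
  proof -
    have "linear L" using oL by (simp add: orthogonal_transformation)
    then have "bounded_linear L" using linear_conv_bounded_linear by blast
    then have "continuous_on UNIV L" by (rule linear_continuous_on)
    then have "continuous_on UNIV (\<lambda>x. L x + T 0)" by (intro continuous_intros)
    then show ?thesis by (rule continuous_on_eq) (auto simp: L_def)
  qed
  have contc: "continuous_on {a..b} c"
    using smooth_d0[OF sm] by (intro continuous_at_imp_continuous_on) (auto intro: differentiable_imp_continuous_within)
  define g where "g = inv_into {a..b} c"
  have gc: "g (c x) = x" if "x \<in> {a..b}" for x unfolding g_def using inj that by (simp add: inv_into_f_f)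
  have contg: "continuous_on (c ` {a..b}) g"
    by (rule continuous_on_inv[OF contc compact_Icc]) (use gc in auto)
  define \<phi> where "\<phi> s = g (T (c s))" for s
  have TcC: "T (c s) \<in> c ` {a..b}" if "s \<in> {a..b}" for s using TC that by blast
  have phiI: "\<phi> s \<in> {a..b}" if "s \<in> {a..b}" for s
    unfolding \<phi>_def using TcC[OF that] gc by auto
  have cphi: "c (\<phi> s) = T (c s)" if "s \<in> {a..b}" for s
    unfolding \<phi>_def g_def using TcC[OF that] by (simp add: f_inv_into_f)
  have contphi: "continuous_on {a..b} \<phi>"
    unfolding \<phi>_def
    by (rule continuous_on_compose2[OF contg]) (use TcC in \<open>auto intro!: continuous_on_compose2[OF contT contc]\<close>)
  have injphi: "inj_on \<phi> {a..b}"
  proof (rule inj_onI)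
    fix x y assume xy: "x \<in> {a..b}" "y \<in> {a..b}" "\<phi> x = \<phi> y"
    then have "T (c x) = T (c y)" using cphi by metis
    then have "dist (c x) (c y) = 0" using dT[of "c x" "c y"] by simp
    then show "x = y" using inj xy by (auto dest: inj_onD)
  qed
  have rat: "((\<lambda>y. \<bar>\<phi> y - \<phi> s\<bar> / \<bar>y - s\<bar>) \<longlongrightarrow> 1) (at s within {a..b})" if s: "s \<in> {a..b}" for s
  proof (rule ratio_lim)
    show "(c has_vector_derivative vd c s) (at s)" by (rule vd_has[OF smooth_d0[OF sm]])
    show "(c has_vector_derivative vd c (\<phi> s)) (at (\<phi> s))" by (rule vd_has[OF smooth_d0[OF sm]])
    show "norm (vd c s) = 1" using un s by auto
    show "norm (vd c (\<phi> s)) = 1" using un phiI[OF s] by auto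
    show "(\<phi> \<longlongrightarrow> \<phi> s) (at s within {a..b})"
      using contphi s by (simp add: continuous_on_eq_continuous_within continuous_within)
    show "\<forall>y\<in>{a..b}. y \<noteq> s \<longrightarrow> \<phi> y \<noteq> \<phi> s" using injphi s by (auto dest: inj_onD)
    show "\<forall>y\<in>{a..b}. norm (c (\<phi> y) - c (\<phi> s)) = norm (c y - c s)"
      using cphi s dT by (simp add: dist_norm)
  qed
  have "(\<forall>s\<in>{a..b}. \<phi> s = s) \<or> (\<forall>s\<in>{a..b}. \<phi> s = a + b - s)"
    by (rule flip_from_phi[OF ab _ contphi injphi rat]) (use phiI in auto)
  moreover have "\<not> (\<forall>s\<in>{a..b}. \<phi> s = s)"
  proof
    assume "\<forall>s\<in>{a..b}. \<phi> s = s"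
    then have "\<forall>s\<in>{a..b}. T (c s) = c s" using cphi by metis
    with nt show False by auto
  qed
  ultimately have "\<forall>s\<in>{a..b}. \<phi> s = - s" unfolding a_def b_def by auto
  then show ?thesis using cphi unfolding I by metis
qed



lemma frame_rel:
  fixes c :: "real \<Rightarrow> real^3" and L :: "real^3 \<Rightarrow> real^3"
  assumes sm: "smooth_fn c" and ab: "a < b" and symI0: "\<forall>s\<in>{a..b}. -s \<in> {a..b}"
    and kap0: "\<forall>s\<in>{a..b}. curvature c s \<noteq> 0"
    and oL: "orthogonal_transformation L"
    and flip0: "\<forall>s\<in>{a..b}. L (c s) + p = c (-s)"
    and s: "s \<in> {a..b}"
  shows "vd c (-s) = - L (vd c s)"
    and "vd (vd c) (-s) = L (vd (vd c) s)"
    and "curvature c (-s) = curvature c s"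
    and "principal_normal c (-s) = L (principal_normal c s)"
    and "binormal c (-s) = - det (matrix L) *\<^sub>R L (binormal c s)"
    and "vd (principal_normal c) (-s) = - L (vd (principal_normal c) s)"
    and "torsion c (-s) = det (matrix L) * torsion c s"
proof -
  have symI: "\<And>s. s \<in> {a..b} \<Longrightarrow> -s \<in> {a..b}" using symI0 by blast
  have kap: "\<And>s. s \<in> {a..b} \<Longrightarrow> curvature c s \<noteq> 0" using kap0 by blast
  have flip: "\<And>s. s \<in> {a..b} \<Longrightarrow> L (c s) + p = c (-s)" using flip0 by blast
  have lin: "linear L" using oL by (simp add: orthogonal_transformation)
  have bL: "bounded_linear L" using lin linear_conv_bounded_linear by blast
  have nL: "norm (L x) = norm x" for x using oL by (rule orthogonal_transformation_norm)
  have iL: "L x \<bullet> L y = x \<bullet> y" for x y using oL by (simp add: orthogonal_transformation_def)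
  have ms: "-s \<in> {a..b}" using symI[OF s] .
  have dg: "(\<lambda>t. L (f t) + p) differentiable (at x)" "vd (\<lambda>t. L (f t) + p) x = L (vd f x)"
    if "f differentiable (at x)" for f :: "real \<Rightarrow> real^3" and x
  proof -
    have "((\<lambda>t. L (f t) + p) has_vector_derivative L (vd f x) + 0) (at x)"
      by (intro has_vector_derivative_add bounded_linear.has_vector_derivative[OF bL] vd_has[OF that] has_vector_derivative_const)
    then show "(\<lambda>t. L (f t) + p) differentiable (at x)" "vd (\<lambda>t. L (f t) + p) x = L (vd f x)"
      by (auto intro: differentiableI_vector vd_eqI)
  qed
  have R1: "vd c (-t) = - L (vd c t)" if t: "t \<in> {a..b}" for t
  proof -
    have "vd (\<lambda>t. c (-t)) t = vd (\<lambda>t. L (c t) + p) t"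
      by (rule vd_eq_ivl[OF diff_neg[OF smooth_d0[OF sm]] dg(1)[OF smooth_d0[OF sm]] ab t])
         (use flip in auto)
    then have "- vd c (-t) = L (vd c t)" using vd_neg[OF smooth_d0[OF sm]] dg(2)[OF smooth_d0[OF sm]] by simp
    then show ?thesis by (metis minus_minus)
  qed
  show "vd c (-s) = - L (vd c s)" by (rule R1[OF s])
  have R2: "vd (vd c) (-t) = L (vd (vd c) t)" if t: "t \<in> {a..b}" for t
  proof -
    have d1: "(\<lambda>t. - vd c (-t)) differentiable (at t)"
      using diff_neg[OF smooth_d1[OF sm]] by (rule differentiable_minus)
    have d2: "(\<lambda>t. L (vd c t)) differentiable (at t)"
      using bL smooth_d1[OF sm] by (metis differentiableI_vector bounded_linear.has_vector_derivative vd_has)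
    have "vd (\<lambda>t. - vd c (-t)) t = vd (\<lambda>t. L (vd c t)) t"
      by (rule vd_eq_ivl[OF d1 d2 ab t]) (use R1 in auto)
    moreover have "vd (\<lambda>t. - vd c (-t)) t = vd (vd c) (-t)"
      using vd_uminus[OF diff_neg[OF smooth_d1[OF sm]]] vd_neg[OF smooth_d1[OF sm]] by simp
    moreover have "vd (\<lambda>t. L (vd c t)) t = L (vd (vd c) t)"
      by (rule vd_lin[OF bL smooth_d1[OF sm]])
    ultimately show ?thesis by simp
  qed
  show "vd (vd c) (-s) = L (vd (vd c) s)" by (rule R2[OF s])
  have K: "curvature c (-t) = curvature c t" if t: "t \<in> {a..b}" for t
    unfolding curvature_def using R2[OF t] nL by simp
  show "curvature c (-s) = curvature c s" by (rule K[OF s])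
  have N: "principal_normal c (-t) = L (principal_normal c t)" if t: "t \<in> {a..b}" for t
    unfolding principal_normal_def using R2[OF t] K[OF t] linear_cmul[OF lin] by simp
  show "principal_normal c (-s) = L (principal_normal c s)" by (rule N[OF s])
  have B: "binormal c (-t) = - det (matrix L) *\<^sub>R L (binormal c t)" if t: "t \<in> {a..b}" for t
    unfolding binormal_def tangent_def using R1[OF t] N[OF t] cross_orthogonal_transformation[OF oL] by simp
  show "binormal c (-s) = - det (matrix L) *\<^sub>R L (binormal c s)" by (rule B[OF s])
  have ND: "vd (principal_normal c) (-s) = - L (vd (principal_normal c) s)"
  proof -
    have d1: "(\<lambda>t. principal_normal c (-t)) differentiable (at s)"
      by (rule diff_neg[OF pn_diff[OF sm kap[OF ms]]])
    have d2: "(\<lambda>t. L (principal_normal c t)) differentiable (at s)"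
      using bL pn_diff[OF sm kap[OF s]] by (metis differentiableI_vector bounded_linear.has_vector_derivative vd_has)
    have "vd (\<lambda>t. principal_normal c (-t)) s = vd (\<lambda>t. L (principal_normal c t)) s"
      by (rule vd_eq_ivl[OF d1 d2 ab s]) (use N in auto)
    then have "- vd (principal_normal c) (- s) = L (vd (principal_normal c) s)"
      using vd_neg[OF pn_diff[OF sm kap[OF ms]]] vd_lin[OF bL pn_diff[OF sm kap[OF s]]] by simp
    then show ?thesis by (metis minus_minus)
  qed
  show "vd (principal_normal c) (-s) = - L (vd (principal_normal c) s)" by (rule ND)
  show "torsion c (-s) = det (matrix L) * torsion c s"
    unfolding torsion_def ND B[OF s] using iL by (simp add: linear_cmul[OF lin] linear_neg[OF lin])
qed



lemma cos_lt1: "0 < \<bar>x::real\<bar> \<Longrightarrow> \<bar>x\<bar> < pi/2 \<Longrightarrow> cos x < 1"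
  using cos_monotone_0_pi[of 0 "\<bar>x\<bar>"] by simp

lemma smooth_cont: "smooth_fn f \<Longrightarrow> continuous_on UNIV f"
  by (intro continuous_at_imp_continuous_on) (auto intro: differentiable_imp_continuous_within smooth_d0)

lemma alpha_inv_props:
  fixes c :: "real \<Rightarrow> real^3" and \<alpha> :: "real \<Rightarrow> real"
  assumes sm: "smooth_fn c" and sa: "smooth_fn \<alpha>" and ab: "a < b"
    and symI0: "\<forall>s\<in>{a..b}. -s \<in> {a..b}"
    and kap0: "\<forall>s\<in>{a..b}. curvature c s \<noteq> 0"
    and K0: "\<forall>s\<in>{a..b}. curvature c (-s) = curvature c s"
    and rng0: "\<forall>s\<in>{a..b}. -pi/2 < \<alpha> s \<and> \<alpha> s < pi/2 \<and> \<alpha> s \<noteq> 0"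
    and s: "s \<in> {a..b}"
  shows "alpha_inv c \<alpha> s = \<alpha> s" and "alpha_inv c \<alpha> differentiable (at s)"
    and "vd (alpha_inv c \<alpha>) s = vd \<alpha> s"
proof -
  have symI: "\<And>s. s \<in> {a..b} \<Longrightarrow> -s \<in> {a..b}" using symI0 by blast
  have kap: "\<And>s. s \<in> {a..b} \<Longrightarrow> curvature c s \<noteq> 0" using kap0 by blast
  have K: "\<And>s. s \<in> {a..b} \<Longrightarrow> curvature c (-s) = curvature c s" using K0 by blast
  have rng: "\<And>s. s \<in> {a..b} \<Longrightarrow> -pi/2 < \<alpha> s \<and> \<alpha> s < pi/2 \<and> \<alpha> s \<noteq> 0" using rng0 by blast
  have eqI: "alpha_inv c \<alpha> t = \<alpha> t" if t: "t \<in> {a..b}" for t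
  proof -
    have r: "curvature c t * cos (\<alpha> t) / curvature c (-t) = cos (\<alpha> t)"
      using K[OF t] kap[OF t] by simp
    show ?thesis
    proof (cases "\<alpha> t > 0")
      case True
      then show ?thesis using rng[OF t] unfolding alpha_inv_def r by (simp add: arccos_cos)
    next
      case False
      then have "\<alpha> t < 0" using rng[OF t] by auto
      moreover have "arccos (cos (\<alpha> t)) = - \<alpha> t"
        using arccos_cos[of "- \<alpha> t"] rng[OF t] calculation by simp
      ultimately show ?thesis unfolding alpha_inv_def r by simp
    qed
  qed
  show "alpha_inv c \<alpha> s = \<alpha> s" by (rule eqI[OF s])
  define h where "h t = curvature c t * cos (\<alpha> t) / curvature c (-t)" for t
  have ms: "-s \<in> {a..b}" using symI[OF s] .
  have hd: "h differentiable (at s)"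
  proof -
    have k1: "curvature c differentiable (at s)" by (rule kappa_diff[OF sm kap[OF s]])
    have k2: "(\<lambda>t. curvature c (-t)) differentiable (at s)"
      by (rule diff_neg, rule kappa_diff[OF sm], simp add: kap[OF ms])
    have ca: "(\<lambda>t. cos (\<alpha> t)) differentiable (at s)"
      by (rule differentiable_compose[of cos], simp add: real_differentiable_def, rule exI, rule DERIV_cos, rule smooth_d0[OF sa])
    show ?thesis unfolding h_def[abs_def]
      using k1 k2 ca kap[OF ms] by (intro differentiable_divide differentiable_mult) auto
  qed
  have hs: "h s = cos (\<alpha> s)" unfolding h_def using K[OF s] kap[OF s] by simp
  have hb: "-1 < h s" "h s < 1"
  proof -
    have "0 < cos (\<alpha> s)" using rng[OF s] by (intro cos_gt_zero_pi) auto
    moreover have "cos (\<alpha> s) < 1" using rng[OF s] by (intro cos_lt1) auto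
    ultimately show "-1 < h s" "h s < 1" using hs by auto
  qed
  have ah: "(\<lambda>t. arccos (h t)) differentiable (at s)"
    by (rule differentiable_compose[of arccos, OF _ hd])
       (auto simp: real_differentiable_def intro!: exI DERIV_arccos hb)
  define \<sigma> where "\<sigma> = sgn (\<alpha> s)"
  define S where "S = (if \<alpha> s > 0 then {t. 0 < \<alpha> t} else {t. \<alpha> t < 0})"
  have oS: "open S" unfolding S_def using smooth_cont[OF sa]
    by (auto intro!: open_Collect_less continuous_on_const)
  have sS: "s \<in> S" unfolding S_def using rng[OF s] by auto
  have eqS: "\<sigma> * arccos (h t) = alpha_inv c \<alpha> t" if "t \<in> S" for t
    using that rng[OF s] unfolding S_def \<sigma>_def alpha_inv_def h_def by (auto split: if_splits)
  have ah2: "(\<lambda>t. \<sigma> * arccos (h t)) differentiable (at s)"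
    using ah by (intro differentiable_mult differentiable_const)
  then obtain D where "((\<lambda>t. \<sigma> * arccos (h t)) has_derivative D) (at s)"
    unfolding differentiable_def by blast
  then have "(alpha_inv c \<alpha> has_derivative D) (at s)"
    by (rule has_derivative_transform_within_open[OF _ oS sS eqS])
  then show ad: "alpha_inv c \<alpha> differentiable (at s)" by (auto simp: differentiable_def)
  show "vd (alpha_inv c \<alpha>) s = vd \<alpha> s"
    by (rule vd_eq_ivl[OF ad smooth_d0[OF sa] ab s]) (use eqI in auto)
qed

lemma alpha_sym:
  fixes c :: "real \<Rightarrow> real^3" and \<alpha> :: "real \<Rightarrow> real"
  assumes sa: "smooth_fn \<alpha>" and ab: "a < b"
    and symI0: "\<forall>s\<in>{a..b}. -s \<in> {a..b}"
    and kap0: "\<forall>s\<in>{a..b}. curvature c s \<noteq> 0"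
    and K0: "\<forall>s\<in>{a..b}. curvature c (-s) = curvature c s"
    and rng0: "\<forall>s\<in>{a..b}. -pi/2 < \<alpha> s \<and> \<alpha> s < pi/2 \<and> \<alpha> s \<noteq> 0"
    and hs0: "\<forall>s\<in>{a..b}. geod_curv c \<alpha> (-s) = geod_curv c \<alpha> s"
    and s: "s \<in> {a..b}"
  shows "\<alpha> (-s) = \<alpha> s" and "vd \<alpha> (-s) = - vd \<alpha> s"
proof -
  have symI: "\<And>s. s \<in> {a..b} \<Longrightarrow> -s \<in> {a..b}" using symI0 by blast
  have kap: "\<And>s. s \<in> {a..b} \<Longrightarrow> curvature c s \<noteq> 0" using kap0 by blast
  have K: "\<And>s. s \<in> {a..b} \<Longrightarrow> curvature c (-s) = curvature c s" using K0 by blast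
  have rng: "\<And>s. s \<in> {a..b} \<Longrightarrow> -pi/2 < \<alpha> s \<and> \<alpha> s < pi/2 \<and> \<alpha> s \<noteq> 0" using rng0 by blast
  have hs: "\<And>s. s \<in> {a..b} \<Longrightarrow> geod_curv c \<alpha> (-s) = geod_curv c \<alpha> s" using hs0 by blast
  have sign: "0 < \<alpha> x \<longleftrightarrow> 0 < \<alpha> y" if x: "x \<in> {a..b}" and y: "y \<in> {a..b}" for x y
  proof (rule ccontr)
    assume "\<not> (0 < \<alpha> x \<longleftrightarrow> 0 < \<alpha> y)"
    then have m: "(\<alpha> x < 0 \<and> 0 < \<alpha> y) \<or> (\<alpha> y < 0 \<and> 0 < \<alpha> x)" using rng x y
      by (metis linorder_neqE_linordered_idom)
    have ci: "continuous_on {u..v} \<alpha>" for u v using smooth_cont[OF sa] by (rule continuous_on_subset) auto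
    have "\<exists>z\<in>{a..b}. \<alpha> z = 0"
    proof (cases "x \<le> y")
      case True
      from m show ?thesis
      proof
        assume "\<alpha> x < 0 \<and> 0 < \<alpha> y"
        then obtain z where "x \<le> z" "z \<le> y" "\<alpha> z = 0" using IVT'[of \<alpha> x 0 y] True ci by auto
        then show ?thesis using x y by (intro bexI[of _ z]) auto
      next
        assume "\<alpha> y < 0 \<and> 0 < \<alpha> x"
        then obtain z where "x \<le> z" "z \<le> y" "\<alpha> z = 0" using IVT2'[of \<alpha> y 0 x] True ci by auto
        then show ?thesis using x y by (intro bexI[of _ z]) auto
      qed
    next
      case False
      from m show ?thesis
      proof
        assume "\<alpha> x < 0 \<and> 0 < \<alpha> y"
        then obtain z where "y \<le> z" "z \<le> x" "\<alpha> z = 0" using IVT2'[of \<alpha> x 0 y] False ci by auto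
        then show ?thesis using x y by (intro bexI[of _ z]) auto
      next
        assume "\<alpha> y < 0 \<and> 0 < \<alpha> x"
        then obtain z where "y \<le> z" "z \<le> x" "\<alpha> z = 0" using IVT'[of \<alpha> y 0 x] False ci by auto
        then show ?thesis using x y by (intro bexI[of _ z]) auto
      qed
    qed
    then show False using rng by auto
  qed
  have EQ: "\<alpha> (-t) = \<alpha> t" if t: "t \<in> {a..b}" for t
  proof -
    have mt: "-t \<in> {a..b}" using symI[OF t] .
    have "cos (\<alpha> (-t)) = cos (\<alpha> t)" using hs[OF t] K[OF t] kap[OF t] unfolding geod_curv_def by simp
    moreover have "arccos (cos \<bar>\<alpha> (-t)\<bar>) = \<bar>\<alpha> (-t)\<bar>" using rng[OF mt] by (intro arccos_cos) auto
    moreover have "arccos (cos \<bar>\<alpha> t\<bar>) = \<bar>\<alpha> t\<bar>" using rng[OF t] by (intro arccos_cos) auto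
    ultimately have "\<bar>\<alpha> (-t)\<bar> = \<bar>\<alpha> t\<bar>" by (metis cos_abs_real)
    moreover have "0 < \<alpha> (-t) \<longleftrightarrow> 0 < \<alpha> t" by (rule sign[OF mt t])
    ultimately show ?thesis using rng[OF t] rng[OF mt] by (auto simp: abs_if split: if_splits)
  qed
  show "\<alpha> (-s) = \<alpha> s" by (rule EQ[OF s])
  have "vd (\<lambda>t. \<alpha> (-t)) s = vd \<alpha> s"
    by (rule vd_eq_ivl[OF diff_neg[OF smooth_d0[OF sa]] smooth_d0[OF sa] ab s]) (use EQ in auto)
  then show "vd \<alpha> (-s) = - vd \<alpha> s" using vd_neg[OF smooth_d0[OF sa]] by (metis minus_minus)
qed



lemma arccot_neg: "arccot (- x) = pi - arccot x"
  unfolding arccot_def by (simp add: arctan_minus)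

lemma div_negs: "(- p - q) / ((k::real) * - z) = (p + q) / (k * z)"
proof -
  have "(- p - q) / (k * - z) = (- (p + q)) / (- (k * z))" by simp
  then show ?thesis by (simp only: minus_divide_divide)
qed

lemma div_negs2: "- ((- p - q) / (z::real)) = (p + q) / z"
  by (simp add: minus_divide_left)

theorem theorem4p2:
  fixes l :: real and c :: "real \<Rightarrow> real^3" and \<alpha> :: "real \<Rightarrow> real"
    and T :: "real^3 \<Rightarrow> real^3"
  assumes curve: "arclength_curve l c"
    and adm: "admissible_angle l c \<alpha>"
    and sym: "nontrivial_symmetry T (c ` interv l)"
  shows "(positive_isom T \<longrightarrow>
            (\<forall>s\<in>interv l. \<forall>v. T (normal_form c \<alpha> s v) = inverse_nf c \<alpha> s v)
          \<and> (has_symmetry l (geod_curv c \<alpha>) \<longrightarrow>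
               (\<forall>s\<in>interv l. \<forall>v. T (normal_form c \<alpha> (-s) v) = dual_nf c \<alpha> s v)))
       \<and> (negative_isom T \<longrightarrow>
            (\<forall>s\<in>interv l. \<forall>v. T (normal_form c \<alpha> s v) = inverse_dual_nf c \<alpha> s v)
          \<and> (has_symmetry l (geod_curv c \<alpha>) \<longrightarrow>
               (\<forall>s\<in>interv l. \<forall>v. T (normal_form c \<alpha> (-s) v) = normal_form c \<alpha> s v)))"
proof -
  define a where "a = - l / 2"
  define b where "b = l / 2"
  have I: "interv l = {a..b}" unfolding interv_def a_def b_def by simp
  have ab: "a < b" using curve unfolding arclength_curve_def a_def b_def by simp
  have symI: "-s \<in> {a..b}" if "s \<in> {a..b}" for s using that unfolding a_def b_def by auto
  have sm: "smooth_fn c" and kap: "\<And>s. s \<in> {a..b} \<Longrightarrow> curvature c s \<noteq> 0"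
    using curve unfolding arclength_curve_def I by auto
  have sa: "smooth_fn \<alpha>" and rng: "\<And>s. s \<in> {a..b} \<Longrightarrow> -pi/2 < \<alpha> s \<and> \<alpha> s < pi/2 \<and> \<alpha> s \<noteq> 0"
    using adm unfolding admissible_angle_def I by auto
  have iso: "isometry3 T" using sym unfolding nontrivial_symmetry_def symmetry_of_def by auto
  define L where "L = (\<lambda>x. T x - T 0)"
  have oL: "orthogonal_transformation L" unfolding L_def by (rule isom_lin[OF iso])
  have lin: "linear L" using oL by (simp add: orthogonal_transformation)
  have Ladd: "L (x + y) = L x + L y" for x y by (rule linear_add[OF lin])
  have Lsc: "L (r *\<^sub>R x) = r *\<^sub>R L x" for r x by (rule linear_cmul[OF lin])
  have Lneg: "L (- x) = - L x" for x by (rule linear_neg[OF lin])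
  have Ldiff: "L (x - y) = L x - L y" for x y by (rule linear_diff[OF lin])
  have TL: "T x = L x + T 0" for x unfolding L_def by simp
  have flip0: "\<forall>s\<in>{a..b}. T (c s) = c (-s)" using sym_flip[OF curve sym] unfolding I .
  have flip: "L (c s) + T 0 = c (-s)" if "s \<in> {a..b}" for s
    using flip0 that unfolding L_def by simp
  have symI0: "\<forall>s\<in>{a..b}. -s \<in> {a..b}" using symI by blast
  have kap0: "\<forall>s\<in>{a..b}. curvature c s \<noteq> 0" using kap by blast
  have flip1: "\<forall>s\<in>{a..b}. L (c s) + T 0 = c (-s)" using flip by blast
  have rng0: "\<forall>s\<in>{a..b}. -pi/2 < \<alpha> s \<and> \<alpha> s < pi/2 \<and> \<alpha> s \<noteq> 0" using rng by blast
  note FR = frame_rel[OF sm ab symI0 kap0 oL flip1]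
  define D where "D = det (matrix L)"
  have D1: "D = 1 \<or> D = -1" using orthogonal_transformation_det[OF oL] unfolding D_def by linarith
  have pos: "positive_isom T \<longleftrightarrow> D = 1" using D1 unfolding positive_isom_def D_def L_def by auto
  have neg: "negative_isom T \<longleftrightarrow> D = -1" using D1 unfolding negative_isom_def D_def L_def by auto
  have K: "curvature c (-s) = curvature c s" if "s \<in> {a..b}" for s using FR(3)[OF that] .
  have K0: "\<forall>s\<in>{a..b}. curvature c (-s) = curvature c s" using K by blast
  note AI = alpha_inv_props[OF sm sa ab symI0 kap0 K0 rng0]
  define d where "d = (\<lambda>t. c (- t))"
  define as where "as = alpha_inv c \<alpha>"
  have tan_d: "tangent d s = L (tangent c s)" if s: "s \<in> {a..b}" for s
    unfolding d_def rev_tan[OF sm] using FR(1)[OF s] by (simp add: tangent_def)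
  have pn_d: "principal_normal d s = L (principal_normal c s)" if s: "s \<in> {a..b}" for s
    unfolding d_def rev_pn[OF sm] using FR(4)[OF s] by simp
  have bn_d: "binormal d s = D *\<^sub>R L (binormal c s)" if s: "s \<in> {a..b}" for s
    unfolding d_def rev_bn[OF sm] using FR(5)[OF s] unfolding D_def by simp
  have k_d: "curvature d s = curvature c s" if s: "s \<in> {a..b}" for s
    unfolding d_def rev_kappa[OF sm] using K[OF s] .
  have t_d: "torsion d s = D * torsion c s" if s: "s \<in> {a..b}" for s
    unfolding d_def using rev_tau[OF sm kap[OF symI[OF s]]] FR(7)[OF s] unfolding D_def by simp
  have as_eq: "as s = \<alpha> s" "vd as s = vd \<alpha> s" "as differentiable (at s)" if s: "s \<in> {a..b}" for s
    unfolding as_def using AI[OF s] by auto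
  have Tnf: "T (normal_form c \<alpha> s v) = c (-s) + v *\<^sub>R L (ruling c \<alpha> s)" if s: "s \<in> {a..b}" for s v
    unfolding normal_form_def using flip[OF s] TL[of "c s + v *\<^sub>R ruling c \<alpha> s"] by (simp add: Ladd Lsc)
  have Tnf': "T (normal_form c \<alpha> (-s) v) = c s + v *\<^sub>R L (ruling c \<alpha> (-s))" if s: "s \<in> {a..b}" for s v
    using Tnf[OF symI[OF s], of v] by simp
  have Lruling: "L (ruling c \<alpha> s) = cos (beta_fn c \<alpha> s) *\<^sub>R L (tangent c s)
     + sin (beta_fn c \<alpha> s) *\<^sub>R (cos (\<alpha> s) *\<^sub>R L (principal_normal c s)
                                  + sin (\<alpha> s) *\<^sub>R L (binormal c s))" for s
    unfolding ruling_def by (simp add: Ladd Lsc)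
  show ?thesis
  proof (intro conjI impI)
    assume P: "positive_isom T"
    then have D: "D = 1" using pos by simp
    show "\<forall>s\<in>interv l. \<forall>v. T (normal_form c \<alpha> s v) = inverse_nf c \<alpha> s v"
    proof (intro ballI allI)
      fix s v assume s: "s \<in> interv l"
      then have s: "s \<in> {a..b}" using I by simp
      have "beta_fn d as s = beta_fn c \<alpha> s"
        unfolding beta_fn_def using as_eq[OF s] t_d[OF s] k_d[OF s] D by simp
      then have "ruling d as s = L (ruling c \<alpha> s)"
        unfolding ruling_def Lruling using as_eq[OF s] tan_d[OF s] pn_d[OF s] bn_d[OF s] D by (simp add: Ladd Lsc)
      then show "T (normal_form c \<alpha> s v) = inverse_nf c \<alpha> s v"
        unfolding inverse_nf_def Tnf[OF s] by (simp add: normal_form_def d_def as_def)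
    qed
  next
    assume P: "positive_isom T" and HS: "has_symmetry l (geod_curv c \<alpha>)"
    then have D: "D = 1" using pos by simp
    have hs: "\<forall>s\<in>{a..b}. geod_curv c \<alpha> (-s) = geod_curv c \<alpha> s"
      using HS unfolding has_symmetry_def I by auto
    note AS = alpha_sym[OF sa ab symI0 kap0 K0 rng0 hs]
    show "\<forall>s\<in>interv l. \<forall>v. T (normal_form c \<alpha> (-s) v) = dual_nf c \<alpha> s v"
    proof (intro ballI allI)
      fix s v assume s: "s \<in> interv l"
      then have s: "s \<in> {a..b}" using I by simp
      have ms: "-s \<in> {a..b}" using symI[OF s] .
      have e: "L (tangent c (-s)) = - tangent c s" using FR(1)[OF ms] unfolding tangent_def by simp
      have n: "L (principal_normal c (-s)) = principal_normal c s" using FR(4)[OF ms] by simp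
      have bb: "L (binormal c (-s)) = - binormal c s" using FR(5)[OF ms] D unfolding D_def by simp
      have da: "vd (\<lambda>s. - \<alpha> s) s = - vd \<alpha> s" by (rule vd_uminus[OF smooth_d0[OF sa]])
      have "beta_fn c \<alpha> (-s) = pi - beta_fn c (\<lambda>s. - \<alpha> s) s"
        unfolding beta_fn_def da using AS[OF s] K[OF s] FR(7)[OF s] D unfolding D_def
        by (simp add: arccot_neg[symmetric] minus_divide_left)
      then have "L (ruling c \<alpha> (-s)) = ruling c (\<lambda>s. - \<alpha> s) s"
        unfolding ruling_def using AS[OF s] e n bb by (simp add: Ladd Lsc Lneg Ldiff)
      then have "T (normal_form c \<alpha> (-s) v) = c s + v *\<^sub>R ruling c (\<lambda>s. - \<alpha> s) s"
        using Tnf'[OF s, of v] by simp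
      then show "T (normal_form c \<alpha> (-s) v) = dual_nf c \<alpha> s v"
        by (simp add: dual_nf_def normal_form_def)
    qed
  next
    assume N: "negative_isom T"
    then have D: "D = -1" using neg by simp
    show "\<forall>s\<in>interv l. \<forall>v. T (normal_form c \<alpha> s v) = inverse_dual_nf c \<alpha> s v"
    proof (intro ballI allI)
      fix s v assume s: "s \<in> interv l"
      then have s: "s \<in> {a..b}" using I by simp
      have da: "vd (\<lambda>s. - as s) s = - vd as s" by (rule vd_uminus[OF as_eq(3)[OF s]])
      have "beta_fn d (\<lambda>s. - as s) s = beta_fn c \<alpha> s"
        unfolding beta_fn_def da using as_eq[OF s] t_d[OF s] k_d[OF s] D by (simp add: div_negs div_negs2)
      then have "ruling d (\<lambda>s. - as s) s = L (ruling c \<alpha> s)"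
        unfolding ruling_def Lruling using as_eq[OF s] tan_d[OF s] pn_d[OF s] bn_d[OF s] D by (simp add: Ladd Lsc)
      then show "T (normal_form c \<alpha> s v) = inverse_dual_nf c \<alpha> s v"
        unfolding inverse_dual_nf_def dual_nf_def Tnf[OF s] by (simp add: normal_form_def d_def as_def)
    qed
  next
    assume N: "negative_isom T" and HS: "has_symmetry l (geod_curv c \<alpha>)"
    then have D: "D = -1" using neg by simp
    have hs: "\<forall>s\<in>{a..b}. geod_curv c \<alpha> (-s) = geod_curv c \<alpha> s"
      using HS unfolding has_symmetry_def I by auto
    note AS = alpha_sym[OF sa ab symI0 kap0 K0 rng0 hs]
    show "\<forall>s\<in>interv l. \<forall>v. T (normal_form c \<alpha> (-s) v) = normal_form c \<alpha> s v"
    proof (intro ballI allI)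
      fix s v assume s: "s \<in> interv l"
      then have s: "s \<in> {a..b}" using I by simp
      have ms: "-s \<in> {a..b}" using symI[OF s] .
      have e: "L (tangent c (-s)) = - tangent c s" using FR(1)[OF ms] unfolding tangent_def by simp
      have n: "L (principal_normal c (-s)) = principal_normal c s" using FR(4)[OF ms] by simp
      have bb: "L (binormal c (-s)) = binormal c s" using FR(5)[OF ms] D unfolding D_def by simp
      have "beta_fn c \<alpha> (-s) = pi - beta_fn c \<alpha> s"
        unfolding beta_fn_def using AS[OF s] K[OF s] FR(7)[OF s] D unfolding D_def
        by (simp add: arccot_neg[symmetric] minus_divide_left)
      then have "L (ruling c \<alpha> (-s)) = ruling c \<alpha> s"
        unfolding ruling_def using AS[OF s] e n bb by (simp add: Ladd Lsc Lneg Ldiff)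
      then have "T (normal_form c \<alpha> (-s) v) = c s + v *\<^sub>R ruling c \<alpha> s"
        using Tnf'[OF s, of v] by simp
      then show "T (normal_form c \<alpha> (-s) v) = normal_form c \<alpha> s v"
        by (simp add: normal_form_def)
    qed
  qed
qed


end
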